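(* Let $n\ge2$ and $0\le k\le n$. For every $1\le i\le n$ such that it is not the case that $k=n$ and $i\in\{n-1,n\}$, the nerve of the category $\pi^{-1}(i)\cap V_+\pi^{-1}(\{0,\dots,i-1\})$ is weakly contractible.
   Context: $c\mathrm{Sd}^2\Lambda^k[n]$ denotes the poset whose objects are strictly increasing chains $A_0\subsetneq\dots\subsetneq A_m$ ($m\ge0$) of non-empty subsets of $[n]=\{0,\dots,n\}$ with $A_m\ne[n]$ and $A_m\ne[n]\setminus\{k\}$, ordered by $B_\bullet\le A_\bullet$ iff each $B_j$ occurs among the $A_i$. $\pi$ sends $A_\bullet$ to $\min A_0$; for $S\subseteq[n]$, $\pi^{-1}(S)$ is the full subposet of chains with $\min A_0\in S$, and $\pi^{-1}(i)=\pi^{-1}(\{i\})$. For a full subposet $\mathcal{C}$, $V_+\mathcal{C}$ is the full subposet of all $d\in c\mathrm{Sd}^2\Lambda^k[n]$ such that $c\le d$ for some $c\in\mathcal{C}$. *)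

theory Defs
  imports "HOL-Analysis.Analysis"
begin

text \<open>This says all homotopy groups vanish at all basepoints and the space is path connected.\<close>
definition weakly_contractible :: "'a topology \<Rightarrow> bool" where
  "weakly_contractible X \<longleftrightarrow> topspace X \<noteq> {} \<and>
     (\<forall>m f. continuous_map (nsphere m) X f \<longrightarrow>
        (\<exists>c\<in>topspace X. homotopic_with (\<lambda>_. True) (nsphere m) X f (\<lambda>_. c)))"

text \<open>Geometric realization of the nerve (order complex) of a poset P ordered by inclusion:
points are barycentric coordinate functions supported on a nonempty chain of P,
as a subspace of the product topology on functions 'a \<Rightarrow> real.\<close>
definition nerve_realization :: "'a set set \<Rightarrow> ('a set \<Rightarrow> real) topology" where
  "nerve_realization P = subtopology (powertop_real UNIV)
     {x. (\<forall>c. 0 \<le> x c) \<and> (\<forall>c. c \<notin> P \<longrightarrow> x c = 0) \<and> finite {c. x c \<noteq> 0} \<and>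
         (\<Sum>c\<in>{c. x c \<noteq> 0}. x c) = 1 \<and>
         (\<forall>c\<in>{c. x c \<noteq> 0}. \<forall>d\<in>{c. x c \<noteq> 0}. c \<subseteq> d \<or> d \<subseteq> c)}"

text \<open>Objects of cSd^2 Lambda^k[n]: a strictly increasing chain A_0 < ... < A_m of nonempty
subsets of [n] = {0..n} is represented by its (nonempty, finite) set of members; its top
A_m is the union and its bottom A_0 the intersection. The order B \<le> A (each B_j occurs
among the A_i) is then inclusion of these sets.\<close>
definition cSd2 :: "nat \<Rightarrow> nat \<Rightarrow> nat set set set" where
  "cSd2 n k = {C. C \<noteq> {} \<and> (\<forall>A\<in>C. A \<noteq> {} \<and> A \<subseteq> {0..n}) \<and>
                   (\<forall>A\<in>C. \<forall>B\<in>C. A \<subseteq> B \<or> B \<subseteq> A) \<and>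
                   \<Union>C \<noteq> {0..n} \<and> \<Union>C \<noteq> {0..n} - {k}}"

definition piSd :: "nat set set \<Rightarrow> nat" where
  "piSd C = Min (\<Inter>C)"

definition preimSd :: "nat \<Rightarrow> nat \<Rightarrow> nat set \<Rightarrow> nat set set set" where
  "preimSd n k S = {C \<in> cSd2 n k. piSd C \<in> S}"

definition Vplus :: "nat \<Rightarrow> nat \<Rightarrow> nat set set set \<Rightarrow> nat set set set" where
  "Vplus n k \<C> = {d \<in> cSd2 n k. \<exists>c\<in>\<C>. c \<subseteq> d}"

end

theory Submission
  imports Defs
begin

definition pushf :: "'a set set \<Rightarrow> ('a set \<Rightarrow> 'a set) \<Rightarrow> ('a set \<Rightarrow> real) \<Rightarrow> ('a set \<Rightarrow> real)" where
  "pushf P f x = (\<lambda>E. \<Sum>C\<in>{C\<in>P. f C = E}. x C)"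

definition amt :: "'a set set \<Rightarrow> real \<Rightarrow> ('a set \<Rightarrow> real) \<Rightarrow> 'a set \<Rightarrow> real" where
  "amt P t x C = min (x C) (max 0 (t - (\<Sum>D\<in>{D\<in>P. C \<subset> D}. x D)))"

definition homf :: "'a set set \<Rightarrow> ('a set \<Rightarrow> 'a set) \<Rightarrow> ('a set \<Rightarrow> 'a set) \<Rightarrow> real \<times> ('a set \<Rightarrow> real) \<Rightarrow> ('a set \<Rightarrow> real)" where
  "homf P f g tx = (\<lambda>E. (\<Sum>C\<in>{C\<in>P. g C = E}. amt P (fst tx) (snd tx) C) +
                        (\<Sum>C\<in>{C\<in>P. f C = E}. snd tx C - amt P (fst tx) (snd tx) C))"

definition realS :: "'a set set \<Rightarrow> ('a set \<Rightarrow> real) set" where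
  "realS P = {x. (\<forall>c. 0 \<le> x c) \<and> (\<forall>c. c \<notin> P \<longrightarrow> x c = 0) \<and> finite {c. x c \<noteq> 0} \<and>
         (\<Sum>c\<in>{c. x c \<noteq> 0}. x c) = 1 \<and>
         (\<forall>c\<in>{c. x c \<noteq> 0}. \<forall>d\<in>{c. x c \<noteq> 0}. c \<subseteq> d \<or> d \<subseteq> c)}"

lemma topspace_nr: "topspace (nerve_realization P) = realS P"
  unfolding nerve_realization_def realS_def by auto

lemma nr_def2: "nerve_realization P = subtopology (powertop_real UNIV) (realS P)"
  unfolding nerve_realization_def realS_def by simp

lemma realS_sumP:
  assumes "x \<in> realS P" "finite P"
  shows "(\<Sum>c\<in>P. x c) = 1"
proof -
  have "(\<Sum>c\<in>{c. x c \<noteq> 0}. x c) = 1" using assms by (auto simp: realS_def)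
  moreover have "{c. x c \<noteq> 0} \<subseteq> P" using assms by (auto simp: realS_def)
  ultimately show ?thesis
    by (subst (asm) sum.mono_neutral_left[OF assms(2)]) auto
qed

lemma amt_bounds:
  assumes "x \<in> realS P"
  shows "0 \<le> amt P t x C" "amt P t x C \<le> x C"
  using assms by (auto simp: amt_def realS_def)

lemma sum_gt:
  assumes "x \<in> realS P" "finite P" "C \<subset> C'" "C' \<in> P"
  shows "x C' + (\<Sum>D\<in>{D\<in>P. C' \<subset> D}. x D) \<le> (\<Sum>D\<in>{D\<in>P. C \<subset> D}. x D)"
proof -
  have nn: "\<And>c. 0 \<le> x c" using assms by (auto simp: realS_def)
  have "x C' + (\<Sum>D\<in>{D\<in>P. C' \<subset> D}. x D) = (\<Sum>D\<in>insert C' {D\<in>P. C' \<subset> D}. x D)"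
    using assms by (subst sum.insert) auto
  also have "\<dots> \<le> (\<Sum>D\<in>{D\<in>P. C \<subset> D}. x D)"
    using assms nn by (intro sum_mono2) auto
  finally show ?thesis .
qed

lemma key_homotopy:
  fixes P :: "'a set set" and f g :: "'a set \<Rightarrow> 'a set"
  assumes finP: "finite P"
    and fP: "\<And>C. C \<in> P \<Longrightarrow> f C \<in> P" and gP: "\<And>C. C \<in> P \<Longrightarrow> g C \<in> P"
    and fg: "\<And>C. C \<in> P \<Longrightarrow> f C \<subseteq> g C"
    and monf: "\<And>C D. C \<in> P \<Longrightarrow> D \<in> P \<Longrightarrow> C \<subseteq> D \<Longrightarrow> f C \<subseteq> f D"
    and mong: "\<And>C D. C \<in> P \<Longrightarrow> D \<in> P \<Longrightarrow> C \<subseteq> D \<Longrightarrow> g C \<subseteq> g D"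
  shows "homotopic_with (\<lambda>_. True) (nerve_realization P) (nerve_realization P) (pushf P f) (pushf P g)"
proof (subst homotopic_with, simp, intro exI conjI ballI)
  let ?h = "homf P f g"
  show "?h (0, x) = pushf P f x" if x: "x \<in> topspace (nerve_realization P)" for x
  proof -
    have xs: "x \<in> realS P" using x topspace_nr by blast
    have "amt P 0 x C = 0" for C
    proof -
      have "0 \<le> (\<Sum>D\<in>{D\<in>P. C \<subset> D}. x D)" using xs by (intro sum_nonneg) (auto simp: realS_def)
      then show ?thesis using xs by (auto simp: amt_def realS_def)
    qed
    then show ?thesis by (simp add: homf_def pushf_def)
  qed
  show "?h (1, x) = pushf P g x" if x: "x \<in> topspace (nerve_realization P)" for x
  proof -
    have xs: "x \<in> realS P" using x topspace_nr by blast
    have "amt P 1 x C = x C" if C: "C \<in> P" for C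
    proof -
      have "x C + (\<Sum>D\<in>{D\<in>P. C \<subset> D}. x D) = (\<Sum>D\<in>insert C {D\<in>P. C \<subset> D}. x D)"
        using finP by (subst sum.insert) auto
      also have "\<dots> \<le> (\<Sum>D\<in>P. x D)"
        using finP C xs by (intro sum_mono2) (auto simp: realS_def)
      also have "\<dots> = 1" using realS_sumP[OF xs finP] .
      finally show ?thesis using xs by (auto simp: amt_def realS_def)
    qed
    then show ?thesis by (simp add: homf_def pushf_def)
  qed
  show "continuous_map (prod_topology (top_of_set {0..1}) (nerve_realization P)) (nerve_realization P) ?h"
  proof -
    have cx: "continuous_map (prod_topology (top_of_set {0..1}) (nerve_realization P)) euclideanreal (\<lambda>tx. snd tx C)" for C
      unfolding nr_def2
      by (intro continuous_map_compose[OF continuous_map_snd, unfolded o_def] continuous_intros) auto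
    have ct: "continuous_map (prod_topology (top_of_set {0..1}) (nerve_realization P)) euclideanreal (\<lambda>tx. fst tx)"
      by (intro continuous_map_compose[OF continuous_map_fst, unfolded o_def] continuous_intros) auto
    have ca: "continuous_map (prod_topology (top_of_set {0..1}) (nerve_realization P)) euclideanreal (\<lambda>tx. amt P (fst tx) (snd tx) C)" for C
      unfolding amt_def
      by (intro continuous_intros cx ct finite_subset[OF _ finP]) auto
    have c1: "continuous_map (prod_topology (top_of_set {0..1}) (nerve_realization P)) (powertop_real UNIV) ?h"
      unfolding continuous_map_componentwise_UNIV homf_def
      by (intro allI continuous_intros ca cx finite_subset[OF _ finP]) auto
    have c2: "?h tx \<in> realS P" if tx: "tx \<in> topspace (prod_topology (top_of_set {0..1}) (nerve_realization P))" for tx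
    proof -
      obtain t x where txe: "tx = (t, x)" and t: "t \<in> {0..1}" and xs: "x \<in> realS P"
        using tx topspace_nr by (cases tx) auto
      let ?a = "\<lambda>C. amt P t x C"
      have nn: "\<And>c. 0 \<le> x c" and out: "\<And>c. c \<notin> P \<Longrightarrow> x c = 0"
        and ch: "\<And>c d. x c \<noteq> 0 \<Longrightarrow> x d \<noteq> 0 \<Longrightarrow> c \<subseteq> d \<or> d \<subseteq> c"
        using xs by (auto simp: realS_def)
      have ab: "\<And>C. 0 \<le> ?a C" "\<And>C. ?a C \<le> x C" using amt_bounds[OF xs] by auto
      have hE: "?h tx E = (\<Sum>C\<in>{C\<in>P. g C = E}. ?a C) + (\<Sum>C\<in>{C\<in>P. f C = E}. x C - ?a C)" for E
        by (simp add: homf_def txe)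
      have h_nn: "0 \<le> ?h tx E" for E
        unfolding hE using ab by (intro add_nonneg_nonneg sum_nonneg) auto
      have h_out: "?h tx E = 0" if "E \<notin> P" for E
      proof -
        have e: "{C\<in>P. g C = E} = {}" "{C\<in>P. f C = E} = {}" using that fP gP by auto
        show ?thesis by (simp only: hE e sum.empty add_0)
      qed
      have supp: "{c. ?h tx c \<noteq> 0} \<subseteq> P" using h_out by auto
      have sum1: "(\<Sum>c\<in>{c. ?h tx c \<noteq> 0}. ?h tx c) = 1"
      proof -
        have "(\<Sum>c\<in>{c. ?h tx c \<noteq> 0}. ?h tx c) = (\<Sum>c\<in>P. ?h tx c)"
          by (rule sum.mono_neutral_left[OF finP supp]) auto
        also have "\<dots> = (\<Sum>E\<in>P. \<Sum>C\<in>{C\<in>P. g C = E}. ?a C) + (\<Sum>E\<in>P. \<Sum>C\<in>{C\<in>P. f C = E}. x C - ?a C)"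
          unfolding hE by (simp add: sum.distrib)
        also have "\<dots> = (\<Sum>C\<in>P. ?a C) + (\<Sum>C\<in>P. x C - ?a C)"
          using sum.group[OF finP finP, of g ?a] sum.group[OF finP finP, of f "\<lambda>C. x C - ?a C"] fP gP
          by (auto simp: image_subset_iff)
        also have "\<dots> = (\<Sum>C\<in>P. x C)" by (simp add: sum_subtractf)
        also have "\<dots> = 1" using realS_sumP[OF xs finP] .
        finally show ?thesis .
      qed
      have nz: "(\<exists>C\<in>P. g C = E \<and> ?a C \<noteq> 0 \<and> x C \<noteq> 0) \<or> (\<exists>C\<in>P. f C = E \<and> x C - ?a C \<noteq> 0 \<and> x C \<noteq> 0)"
        if "?h tx E \<noteq> 0" for E
      proof (rule ccontr)
        assume nt: "\<not> ?thesis"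
        have z1: "?a C = 0" if "C \<in> {C\<in>P. g C = E}" for C
        proof (rule ccontr)
          assume "?a C \<noteq> 0"
          moreover have "x C \<noteq> 0" using \<open>?a C \<noteq> 0\<close> ab[of C] by linarith
          ultimately show False using nt that by blast
        qed
        have z2: "x C - ?a C = 0" if "C \<in> {C\<in>P. f C = E}" for C
        proof (rule ccontr)
          assume "x C - ?a C \<noteq> 0"
          moreover have "x C \<noteq> 0" using \<open>x C - ?a C \<noteq> 0\<close> ab[of C] by linarith
          ultimately show False using nt that by blast
        qed
        from z1 z2 have "\<And>C. C \<in> {C\<in>P. g C = E} \<Longrightarrow> ?a C = 0" "\<And>C. C \<in> {C\<in>P. f C = E} \<Longrightarrow> x C - ?a C = 0"
          by auto
        then have "?h tx E = 0" unfolding hE by simp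
        with \<open>?h tx E \<noteq> 0\<close> show False by simp
      qed
      have cross: "f C' \<subseteq> g C" if "C \<in> P" "C' \<in> P" "?a C \<noteq> 0" "x C' - ?a C' \<noteq> 0" "x C \<noteq> 0" "x C' \<noteq> 0" for C C'
      proof -
        have "C \<subseteq> C' \<or> C' \<subseteq> C" using ch that by blast
        moreover have "\<not> C \<subset> C'"
        proof
          assume sub: "C \<subset> C'"
          have "t > (\<Sum>D\<in>{D\<in>P. C \<subset> D}. x D)"
            using that(3) nn[of C] by (auto simp: amt_def)
          moreover have "t - (\<Sum>D\<in>{D\<in>P. C' \<subset> D}. x D) < x C'"
            using that(4) nn[of C'] by (auto simp: amt_def)
          moreover note sum_gt[OF xs finP sub that(2)]
          ultimately show False by linarith
        qed
        ultimately have "C' \<subseteq> C" by blast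
        then show ?thesis using monf fg that by blast
      qed
      have chain: "c \<subseteq> d \<or> d \<subseteq> c" if "?h tx c \<noteq> 0" "?h tx d \<noteq> 0" for c d
      proof -
        from nz[OF that(1)] nz[OF that(2)] show ?thesis
        proof (elim disjE bexE conjE)
          fix C C' assume *: "C \<in> P" "g C = c" "?a C \<noteq> 0" "x C \<noteq> 0" "C' \<in> P" "g C' = d" "?a C' \<noteq> 0" "x C' \<noteq> 0"
          then show ?thesis using ch mong by metis
        next
          fix C C' assume *: "C \<in> P" "g C = c" "?a C \<noteq> 0" "x C \<noteq> 0" "C' \<in> P" "f C' = d" "x C' - ?a C' \<noteq> 0" "x C' \<noteq> 0"
          then show ?thesis using cross by blast
        next
          fix C C' assume *: "C \<in> P" "f C = c" "x C - ?a C \<noteq> 0" "x C \<noteq> 0" "C' \<in> P" "g C' = d" "?a C' \<noteq> 0" "x C' \<noteq> 0"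
          then show ?thesis using cross by blast
        next
          fix C C' assume *: "C \<in> P" "f C = c" "x C - ?a C \<noteq> 0" "x C \<noteq> 0" "C' \<in> P" "f C' = d" "x C' - ?a C' \<noteq> 0" "x C' \<noteq> 0"
          then show ?thesis using ch monf by metis
        qed
      qed
      show ?thesis unfolding realS_def
        using h_nn h_out sum1 chain finite_subset[OF supp finP] by auto
    qed
    show ?thesis unfolding nr_def2 continuous_map_in_subtopology
      using c1 c2 unfolding nr_def2 by auto
  qed
qed simp

definition Wset :: "nat \<Rightarrow> nat \<Rightarrow> nat \<Rightarrow> nat set set" where
  "Wset n k i = {A. A \<subseteq> {0..n} \<and> i \<in> A \<and> A \<noteq> {0..n} \<and> A \<noteq> {0..n} - {k}}"

definition goodC :: "nat \<Rightarrow> nat \<Rightarrow> nat \<Rightarrow> nat set set \<Rightarrow> bool" where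
  "goodC n k i C \<longleftrightarrow> C \<noteq> {} \<and> C \<subseteq> Wset n k i \<and> (\<forall>A\<in>C. \<forall>B\<in>C. A \<subseteq> B \<or> B \<subseteq> A) \<and>
     (\<exists>B\<in>C. (\<forall>j\<in>B. i \<le> j) \<and> (\<forall>A\<in>C. B \<subseteq> A)) \<and> (\<exists>A\<in>C. \<exists>j\<in>A. j < i)"

lemma finite_chain_min:
  fixes C :: "'a set set"
  shows "finite C \<Longrightarrow> C \<noteq> {} \<Longrightarrow> (\<forall>A\<in>C. \<forall>B\<in>C. A \<subseteq> B \<or> B \<subseteq> A) \<Longrightarrow> \<exists>B\<in>C. \<forall>A\<in>C. B \<subseteq> A"
proof (induction C rule: finite_ne_induct)
  case (singleton x) then show ?case by auto
next
  case (insert x F)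
  then obtain B where "B \<in> F" "\<forall>A\<in>F. B \<subseteq> A" by auto
  then show ?case using insert.prems by (metis dual_order.trans insert_iff)
qed

lemma finite_chain_max:
  fixes C :: "'a set set"
  shows "finite C \<Longrightarrow> C \<noteq> {} \<Longrightarrow> (\<forall>A\<in>C. \<forall>B\<in>C. A \<subseteq> B \<or> B \<subseteq> A) \<Longrightarrow> \<exists>T\<in>C. \<forall>A\<in>C. A \<subseteq> T"
proof (induction C rule: finite_ne_induct)
  case (singleton x) then show ?case by auto
next
  case (insert x F)
  then obtain B where "B \<in> F" "\<forall>A\<in>F. A \<subseteq> B" by auto
  then show ?case using insert.prems by (metis dual_order.trans insert_iff)
qed

lemma finite_sets_n: "C \<subseteq> Pow {0..(n::nat)} \<Longrightarrow> finite C"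
  by (meson finite_Pow_iff finite_atLeastAtMost finite_subset)

lemma top_cases: "A \<subseteq> T \<Longrightarrow> T \<subseteq> {0..(n::nat)} \<Longrightarrow> A = {0..n} - {k} \<Longrightarrow> T = {0..n} \<or> T = {0..n} - {k}"
  by auto

lemma P_iff:
  "C \<in> preimSd n k {i} \<inter> Vplus n k (preimSd n k {0..<i}) \<longleftrightarrow> goodC n k i C"
proof
  assume "C \<in> preimSd n k {i} \<inter> Vplus n k (preimSd n k {0..<i})"
  then have cs: "C \<in> cSd2 n k" and pi: "Min (\<Inter>C) = i"
    and ex: "\<exists>c\<in>preimSd n k {0..<i}. c \<subseteq> C"
    by (auto simp: preimSd_def Vplus_def piSd_def)
  have ne: "C \<noteq> {}" and mem: "\<And>A. A \<in> C \<Longrightarrow> A \<noteq> {} \<and> A \<subseteq> {0..n}"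
    and ch: "\<forall>A\<in>C. \<forall>B\<in>C. A \<subseteq> B \<or> B \<subseteq> A" and u1: "\<Union>C \<noteq> {0..n}" and u2: "\<Union>C \<noteq> {0..n} - {k}"
    using cs by (auto simp: cSd2_def)
  have fin: "finite C" using mem by (intro finite_sets_n[of C n]) auto
  obtain B where B: "B \<in> C" "\<forall>A\<in>C. B \<subseteq> A" using finite_chain_min[OF fin ne ch] by blast
  obtain T where T: "T \<in> C" "\<forall>A\<in>C. A \<subseteq> T" using finite_chain_max[OF fin ne ch] by blast
  have iB: "\<Inter>C = B" using B by auto
  have uT: "\<Union>C = T" using T by auto
  have finB: "finite B" "B \<noteq> {}" using mem[OF B(1)] finite_subset by auto
  have iinB: "i \<in> B" using pi iB Min_in[OF finB] by auto
  have Bge: "\<forall>j\<in>B. i \<le> j" using pi iB Min_le[OF finB(1)] by auto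
  have W: "C \<subseteq> Wset n k i"
  proof
    fix A assume A: "A \<in> C"
    have "A \<subseteq> T" using T A by auto
    moreover have "T \<subseteq> {0..n}" using mem T by auto
    ultimately have "A \<noteq> {0..n} \<and> A \<noteq> {0..n} - {k}"
      using u1 u2 uT top_cases[of A T n k] by auto
    then show "A \<in> Wset n k i" using A mem B iinB by (auto simp: Wset_def)
  qed
  obtain c where c: "c \<in> preimSd n k {0..<i}" "c \<subseteq> C" using ex by blast
  have ccs: "c \<in> cSd2 n k" and cpi: "Min (\<Inter>c) < i" using c by (auto simp: preimSd_def piSd_def)
  have cne: "c \<noteq> {}" using ccs by (auto simp: cSd2_def)
  have cfin: "finite c" using fin c(2) finite_subset by auto
  obtain B' where B': "B' \<in> c" "\<forall>A\<in>c. B' \<subseteq> A" using finite_chain_min[OF cfin cne] ch c(2) by blast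
  have "\<Inter>c = B'" using B' by auto
  moreover have "finite B'" "B' \<noteq> {}" using mem[of B'] B' c(2) finite_subset[of B' "{0..n}"] by auto
  ultimately have "Min (\<Inter>c) \<in> B'" using Min_in by auto
  then have "\<exists>A\<in>C. \<exists>j\<in>A. j < i" using cpi B' c(2) by blast
  then show "goodC n k i C" unfolding goodC_def using ne W ch B Bge by blast
next
  assume g: "goodC n k i C"
  have ne: "C \<noteq> {}" and W: "C \<subseteq> Wset n k i" and ch: "\<forall>A\<in>C. \<forall>B\<in>C. A \<subseteq> B \<or> B \<subseteq> A"
    and bot: "\<exists>B\<in>C. (\<forall>j\<in>B. i \<le> j) \<and> (\<forall>A\<in>C. B \<subseteq> A)" and meet: "\<exists>A\<in>C. \<exists>j\<in>A. j < i"
    using g unfolding goodC_def by simp_all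
  have fin: "finite C" using W by (intro finite_sets_n[of C n]) (auto simp: Wset_def)
  obtain T where T: "T \<in> C" "\<forall>A\<in>C. A \<subseteq> T" using finite_chain_max[OF fin ne ch] by blast
  have uT: "\<Union>C = T" using T by auto
  obtain B where B: "B \<in> C" "\<forall>j\<in>B. i \<le> j" "\<forall>A\<in>C. B \<subseteq> A" using bot by blast
  have iB: "\<Inter>C = B" using B by auto
  have cs: "C \<in> cSd2 n k" unfolding cSd2_def using ne W ch uT T by (auto simp: Wset_def)
  have "B \<subseteq> {0..n}" "i \<in> B" using B W by (auto simp: Wset_def)
  then have finB: "finite B" "i \<in> B" using finite_subset by auto
  have "Min B = i" using finB B(2) by (intro Min_eqI) auto
  then have pi: "piSd C = i" using iB by (simp add: piSd_def)
  obtain A j where A: "A \<in> C" "j \<in> A" "j < i" using meet by blast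
  have AW: "A \<in> Wset n k i" using A W by auto
  have scs: "{A} \<in> cSd2 n k" using AW by (auto simp: cSd2_def Wset_def)
  have "A \<subseteq> {0..n}" using AW by (auto simp: Wset_def)
  then have "finite A" using finite_subset by auto
  then have "Min A \<le> j" using A by auto
  then have "piSd {A} \<in> {0..<i}" using A by (simp add: piSd_def)
  then have "{A} \<in> preimSd n k {0..<i}" using scs by (simp add: preimSd_def)
  then show "C \<in> preimSd n k {i} \<inter> Vplus n k (preimSd n k {0..<i})"
    using cs pi A by (auto simp: preimSd_def Vplus_def)
qed

definition goodpair :: "nat \<Rightarrow> nat \<Rightarrow> nat \<Rightarrow> (nat set \<Rightarrow> nat set) \<Rightarrow> (nat set \<Rightarrow> nat set) \<Rightarrow> bool" where
  "goodpair n k i pf qf \<longleftrightarrow>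
    (\<forall>A\<in>Wset n k i. pf A \<in> Wset n k i \<and> qf A \<in> Wset n k i \<and> pf A \<subseteq> qf A \<and>
        ((\<forall>j\<in>A. i \<le> j) \<longrightarrow> (\<forall>j\<in>pf A. i \<le> j) \<and> (\<forall>j\<in>qf A. i \<le> j)) \<and>
        ((\<exists>j\<in>A. j < i) \<longrightarrow> (\<exists>j\<in>pf A. j < i) \<and> (\<exists>j\<in>qf A. j < i))) \<and>
    (\<forall>A\<in>Wset n k i. \<forall>B\<in>Wset n k i. A \<subseteq> B \<longrightarrow> pf A \<subseteq> pf B \<and> qf A \<subseteq> qf B)"

definition Hm :: "(nat set \<Rightarrow> nat set) \<Rightarrow> (nat set \<Rightarrow> nat set) \<Rightarrow> nat \<Rightarrow> nat \<Rightarrow> nat set set \<Rightarrow> nat set set" where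
  "Hm pf qf a b C = pf ` {A\<in>C. card A < a} \<union> qf ` {A\<in>C. b \<le> card A}"

lemma W_finite: "A \<in> Wset n k i \<Longrightarrow> finite A"
  unfolding Wset_def using finite_subset by auto

lemma H_good:
  assumes gp: "goodpair n k i pf qf" and gC: "goodC n k i C" and ab: "b \<le> a" "a \<le> Suc b"
  shows "goodC n k i (Hm pf qf a b C)"
proof -
  let ?W = "Wset n k i"
  have ne: "C \<noteq> {}" and W: "C \<subseteq> ?W" and ch: "\<forall>A\<in>C. \<forall>B\<in>C. A \<subseteq> B \<or> B \<subseteq> A"
    and bot: "\<exists>B\<in>C. (\<forall>j\<in>B. i \<le> j) \<and> (\<forall>A\<in>C. B \<subseteq> A)" and meet: "\<exists>A\<in>C. \<exists>j\<in>A. j < i"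
    using gC unfolding goodC_def by simp_all
  have pW: "\<And>A. A \<in> ?W \<Longrightarrow> pf A \<in> ?W" and cW: "\<And>A. A \<in> ?W \<Longrightarrow> qf A \<in> ?W"
    and pc: "\<And>A. A \<in> ?W \<Longrightarrow> pf A \<subseteq> qf A"
    and r4: "\<And>A. A \<in> ?W \<Longrightarrow> (\<forall>j\<in>A. i \<le> j) \<Longrightarrow> (\<forall>j\<in>pf A. i \<le> j) \<and> (\<forall>j\<in>qf A. i \<le> j)"
    and r5: "\<And>A. A \<in> ?W \<Longrightarrow> (\<exists>j\<in>A. j < i) \<Longrightarrow> (\<exists>j\<in>pf A. j < i) \<and> (\<exists>j\<in>qf A. j < i)"
    and mp: "\<And>A B. A \<in> ?W \<Longrightarrow> B \<in> ?W \<Longrightarrow> A \<subseteq> B \<Longrightarrow> pf A \<subseteq> pf B"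
    and mc: "\<And>A B. A \<in> ?W \<Longrightarrow> B \<in> ?W \<Longrightarrow> A \<subseteq> B \<Longrightarrow> qf A \<subseteq> qf B"
    using gp unfolding goodpair_def by (meson subsetD)+
  let ?C = "Hm pf qf a b C"
  have memH: "X \<in> ?C \<longleftrightarrow> (\<exists>A\<in>C. card A < a \<and> X = pf A) \<or> (\<exists>A\<in>C. b \<le> card A \<and> X = qf A)" for X
    unfolding Hm_def by auto
  have cross: "pf A \<subseteq> qf B" if "A \<in> C" "B \<in> C" "card A < a" "b \<le> card B" for A B
  proof -
    have AW: "A \<in> ?W" "B \<in> ?W" using that W by auto
    from ch that have "A \<subseteq> B \<or> B \<subseteq> A" by blast
    then show ?thesis
    proof
      assume "A \<subseteq> B" then show ?thesis using mp[OF AW] pc[OF AW(2)] by blast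
    next
      assume BA: "B \<subseteq> A"
      have fA: "finite A" using W_finite AW by auto
      have "card B \<le> card A" using card_mono[OF fA BA] .
      moreover have "card A \<le> card B" using that ab by linarith
      ultimately have "B = A" using card_subset_eq[OF fA BA] by simp
      then show ?thesis using pc AW by blast
    qed
  qed
  have "?C \<noteq> {}"
  proof -
    obtain A where "A \<in> C" using ne by blast
    show ?thesis
    proof (cases "card A < a")
      case True then have "pf A \<in> ?C" using \<open>A \<in> C\<close> unfolding Hm_def by blast
      then show ?thesis by blast
    next
      case False then have "qf A \<in> ?C" using \<open>A \<in> C\<close> ab unfolding Hm_def by auto
      then show ?thesis by blast
    qed
  qed
  moreover have "?C \<subseteq> ?W" using W pW cW unfolding Hm_def by auto
  moreover have "\<forall>X\<in>?C. \<forall>Y\<in>?C. X \<subseteq> Y \<or> Y \<subseteq> X"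
  proof (intro ballI)
    fix X Y assume X: "X \<in> ?C" and Y: "Y \<in> ?C"
    show "X \<subseteq> Y \<or> Y \<subseteq> X"
      using X Y unfolding memH
    proof (elim disjE bexE conjE)
      fix A B assume h: "A \<in> C" "card A < a" "X = pf A" "B \<in> C" "card B < a" "Y = pf B"
      then have "A \<in> ?W" "B \<in> ?W" using W by auto
      moreover have "A \<subseteq> B \<or> B \<subseteq> A" using ch h by blast
      ultimately show ?thesis using mp h(3,6) by blast
    next
      fix A B assume "A \<in> C" "card A < a" "X = pf A" "B \<in> C" "b \<le> card B" "Y = qf B"
      then show ?thesis using cross by blast
    next
      fix A B assume "A \<in> C" "b \<le> card A" "X = qf A" "B \<in> C" "card B < a" "Y = pf B"
      then show ?thesis using cross by blast
    next
      fix A B assume h: "A \<in> C" "b \<le> card A" "X = qf A" "B \<in> C" "b \<le> card B" "Y = qf B"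
      then have "A \<in> ?W" "B \<in> ?W" using W by auto
      moreover have "A \<subseteq> B \<or> B \<subseteq> A" using ch h by blast
      ultimately show ?thesis using mc h(3,6) by blast
    qed
  qed
  moreover have "\<exists>B\<in>?C. (\<forall>j\<in>B. i \<le> j) \<and> (\<forall>A\<in>?C. B \<subseteq> A)"
  proof -
    obtain B0 where B0: "B0 \<in> C" "\<forall>j\<in>B0. i \<le> j" "\<forall>A\<in>C. B0 \<subseteq> A" using bot by blast
    have B0W: "B0 \<in> ?W" using B0 W by auto
    show ?thesis
    proof (cases "card B0 < a")
      case True
      have "pf B0 \<in> ?C" using True B0 memH by blast
      moreover have "\<forall>j\<in>pf B0. i \<le> j" using r4[OF B0W] B0 by blast
      moreover have "\<forall>X\<in>?C. pf B0 \<subseteq> X"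
      proof
        fix X assume "X \<in> ?C"
        then show "pf B0 \<subseteq> X" unfolding memH
        proof (elim disjE bexE conjE)
          fix A assume "A \<in> C" "card A < a" "X = pf A"
          then show ?thesis using mp B0W W B0 by blast
        next
          fix A assume A: "A \<in> C" "b \<le> card A" "X = qf A"
          then have "A \<in> ?W" using W by auto
          then show ?thesis using mc[OF B0W] pc[OF B0W] A B0 by blast
        qed
      qed
      ultimately show ?thesis by blast
    next
      case False
      then have "b \<le> card B0" using ab by linarith
      then have "qf B0 \<in> ?C" using B0 memH by blast
      moreover have "\<forall>j\<in>qf B0. i \<le> j" using r4[OF B0W] B0 by blast
      moreover have "\<forall>X\<in>?C. qf B0 \<subseteq> X"
      proof
        fix X assume "X \<in> ?C"
        then show "qf B0 \<subseteq> X" unfolding memH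
        proof (elim disjE bexE conjE)
          fix A assume A: "A \<in> C" "card A < a" "X = pf A"
          then have "A \<in> ?W" using W by auto
          then have "card B0 \<le> card A" using B0(3) A(1) W_finite card_mono by blast
          then show ?thesis using A False by linarith
        next
          fix A assume A: "A \<in> C" "b \<le> card A" "X = qf A"
          then have "A \<in> ?W" using W by auto
          then show ?thesis using mc[OF B0W] A B0 by blast
        qed
      qed
      ultimately show ?thesis by blast
    qed
  qed
  moreover have "\<exists>X\<in>?C. \<exists>j\<in>X. j < i"
  proof -
    obtain A where A: "A \<in> C" "\<exists>j\<in>A. j < i" using meet by blast
    then have AW: "A \<in> ?W" using W by auto
    show ?thesis
    proof (cases "card A < a")
      case True
      then have "pf A \<in> ?C" using A memH by blast
      then show ?thesis using r5[OF AW A(2)] by blast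
    next
      case False
      then have "b \<le> card A" using ab by linarith
      then have "qf A \<in> ?C" using A(1) unfolding Hm_def by blast
      then show ?thesis using r5[OF AW A(2)] by blast
    qed
  qed
  ultimately show ?thesis unfolding goodC_def by blast
qed


definition PP :: "nat \<Rightarrow> nat \<Rightarrow> nat \<Rightarrow> nat set set set" where
  "PP n k i = {C. goodC n k i C}"

lemma PP_finite: "finite (PP n k i)"
proof -
  have "PP n k i \<subseteq> Pow (Pow {0..n})" unfolding PP_def goodC_def Wset_def by auto
  then show ?thesis by (rule finite_subset) simp
qed

lemma Hm_mono: "C \<subseteq> D \<Longrightarrow> Hm pf qf a b C \<subseteq> Hm pf qf a b D"
  unfolding Hm_def by auto

lemma pushf_cong: "(\<And>C. C \<in> P \<Longrightarrow> f C = g C) \<Longrightarrow> pushf P f = pushf P g"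
  unfolding pushf_def by (intro ext) (metis (mono_tags, lifting) Collect_cong)

lemma member_hom:
  assumes gp: "goodpair n k i pf qf"
  shows "homotopic_with (\<lambda>_. True) (nerve_realization (PP n k i)) (nerve_realization (PP n k i))
           (pushf (PP n k i) (\<lambda>C. pf ` C)) (pushf (PP n k i) (\<lambda>C. qf ` C))"
proof -
  let ?P = "PP n k i"
  let ?X = "nerve_realization ?P"
  have HP: "Hm pf qf a b C \<in> ?P" if "C \<in> ?P" "b \<le> a" "a \<le> Suc b" for a b C
    using H_good[OF gp _ that(2,3)] that(1) by (simp add: PP_def)
  have step: "homotopic_with (\<lambda>_. True) ?X ?X (pushf ?P (Hm pf qf (Suc m) (Suc m))) (pushf ?P (Hm pf qf m m))" for m
  proof -
    have h1: "homotopic_with (\<lambda>_. True) ?X ?X (pushf ?P (Hm pf qf (Suc m) (Suc m))) (pushf ?P (Hm pf qf (Suc m) m))"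
      by (rule key_homotopy[OF PP_finite], (rule HP; simp), (rule HP; simp), (force simp: Hm_def), (rule Hm_mono; assumption), (rule Hm_mono; assumption))
    have h2: "homotopic_with (\<lambda>_. True) ?X ?X (pushf ?P (Hm pf qf m m)) (pushf ?P (Hm pf qf (Suc m) m))"
      by (rule key_homotopy[OF PP_finite], (rule HP; simp), (rule HP; simp), (force simp: Hm_def), (rule Hm_mono; assumption), (rule Hm_mono; assumption))
    show ?thesis using homotopic_with_trans[OF h1 homotopic_with_symD[OF h2]] .
  qed
  have all: "homotopic_with (\<lambda>_. True) ?X ?X (pushf ?P (Hm pf qf (Suc m) (Suc m))) (pushf ?P (Hm pf qf 0 0))" for m
  proof (induction m)
    case 0 then show ?case using step[of 0] by simp
  next
    case (Suc m)
    then show ?case using homotopic_with_trans[OF step[of "Suc m"]] by blast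
  qed
  have e1: "pushf ?P (Hm pf qf (Suc (Suc n)) (Suc (Suc n))) = pushf ?P (\<lambda>C. pf ` C)"
  proof (rule pushf_cong)
    fix C assume "C \<in> ?P"
    then have W: "C \<subseteq> Wset n k i" by (simp add: PP_def goodC_def)
    have "card A < Suc (Suc n)" if "A \<in> C" for A
    proof -
      have "A \<subseteq> {0..n}" using W that by (auto simp: Wset_def)
      then have "card A \<le> card {0..n}" by (intro card_mono) auto
      then show ?thesis by simp
    qed
    then show "Hm pf qf (Suc (Suc n)) (Suc (Suc n)) C = pf ` C" unfolding Hm_def by force
  qed
  have e2: "pushf ?P (Hm pf qf 0 0) = pushf ?P (\<lambda>C. qf ` C)"
    by (rule pushf_cong) (simp add: Hm_def)
  show ?thesis using all[of "Suc n"] e1 e2 by simp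
qed

definition chi1 :: "nat \<Rightarrow> nat \<Rightarrow> nat set \<Rightarrow> nat set" where
  "chi1 k i A = (if \<exists>j\<in>A. j < i then insert k A else A)"
definition psi2 :: "nat \<Rightarrow> nat \<Rightarrow> nat set \<Rightarrow> nat set" where
  "psi2 k i A = (if \<exists>j\<in>A. j < i then insert k (A \<inter> {0..i}) else {i})"
definition psi3 :: "nat set \<Rightarrow> nat \<Rightarrow> nat set \<Rightarrow> nat set" where
  "psi3 Y i A = (if \<exists>j\<in>A. j < i then Y else {i})"

lemma ins_full: "insert k X = {0..(n::nat)} \<Longrightarrow> X = {0..n} \<or> X = {0..n} - {k}"
proof (cases "k \<in> X")
  case True then show "insert k X = {0..(n::nat)} \<Longrightarrow> ?thesis" by (simp add: insert_absorb)
next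
  case False then show "insert k X = {0..(n::nat)} \<Longrightarrow> ?thesis" by (metis Diff_insert_absorb)
qed

lemma ins_trunc_full:
  assumes "insert k (A \<inter> {0..i}) = {0..(n::nat)}" "i < n" "2 \<le> n"
  shows "k = n \<and> i = n - 1"
proof -
  have "n \<in> insert k (A \<inter> {0..i})" by (simp only: assms(1)) simp
  then have kn: "k = n" using assms(2) by auto
  have "n - 1 \<in> insert k (A \<inter> {0..i})" by (simp only: assms(1)) simp
  then have "n - 1 \<le> i" using kn assms(3) by auto
  then show ?thesis using kn assms(2) by auto
qed

lemma singleton_W: "2 \<le> n \<Longrightarrow> i \<le> n \<Longrightarrow> {i} \<in> Wset n k i"
proof -
  assume a: "2 \<le> n" "i \<le> n"
  have n1: "{i} \<noteq> {0..n}"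
  proof
    assume "{i} = {0..n}"
    then have "0 \<in> {i}" "n \<in> {i}" by auto
    then show False using a by auto
  qed
  have n2: "{i} \<noteq> {0..n} - {k}"
  proof
    assume eq: "{i} = {0..n} - {k}"
    obtain x y where xy: "x \<noteq> y" "x \<le> n" "y \<le> n" "x \<noteq> k" "y \<noteq> k"
    proof (cases "k = 0")
      case True then show ?thesis using that[of 1 2] a by auto
    next
      case False then show ?thesis
        using that[of 0 "if k = 1 then 2 else 1"] a by auto
    qed
    then have "x \<in> {i}" "y \<in> {i}" using eq by auto
    then show False using xy by auto
  qed
  show ?thesis using a n1 n2 by (simp add: Wset_def)
qed

lemma goodpairI:
  assumes "\<And>A. A \<in> Wset n k i \<Longrightarrow> pf A \<in> Wset n k i"
    and "\<And>A. A \<in> Wset n k i \<Longrightarrow> qf A \<in> Wset n k i"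
    and "\<And>A. A \<in> Wset n k i \<Longrightarrow> pf A \<subseteq> qf A"
    and "\<And>A. A \<in> Wset n k i \<Longrightarrow> \<forall>j\<in>A. i \<le> j \<Longrightarrow> \<forall>j\<in>pf A. i \<le> j"
    and "\<And>A. A \<in> Wset n k i \<Longrightarrow> \<forall>j\<in>A. i \<le> j \<Longrightarrow> \<forall>j\<in>qf A. i \<le> j"
    and "\<And>A. A \<in> Wset n k i \<Longrightarrow> \<exists>j\<in>A. j < i \<Longrightarrow> \<exists>j\<in>pf A. j < i"
    and "\<And>A. A \<in> Wset n k i \<Longrightarrow> \<exists>j\<in>A. j < i \<Longrightarrow> \<exists>j\<in>qf A. j < i"
    and "\<And>A B. A \<in> Wset n k i \<Longrightarrow> B \<in> Wset n k i \<Longrightarrow> A \<subseteq> B \<Longrightarrow> pf A \<subseteq> pf B"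
    and "\<And>A B. A \<in> Wset n k i \<Longrightarrow> B \<in> Wset n k i \<Longrightarrow> A \<subseteq> B \<Longrightarrow> qf A \<subseteq> qf B"
  shows "goodpair n k i pf qf"
  unfolding goodpair_def
proof (intro conjI)
  show "\<forall>A\<in>Wset n k i. pf A \<in> Wset n k i \<and> qf A \<in> Wset n k i \<and> pf A \<subseteq> qf A \<and>
        ((\<forall>j\<in>A. i \<le> j) \<longrightarrow> (\<forall>j\<in>pf A. i \<le> j) \<and> (\<forall>j\<in>qf A. i \<le> j)) \<and>
        ((\<exists>j\<in>A. j < i) \<longrightarrow> (\<exists>j\<in>pf A. j < i) \<and> (\<exists>j\<in>qf A. j < i))"
  proof
    fix A assume A: "A \<in> Wset n k i"
    note a = assms(1-7)[OF A]
    show "pf A \<in> Wset n k i \<and> qf A \<in> Wset n k i \<and> pf A \<subseteq> qf A \<and>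
        ((\<forall>j\<in>A. i \<le> j) \<longrightarrow> (\<forall>j\<in>pf A. i \<le> j) \<and> (\<forall>j\<in>qf A. i \<le> j)) \<and>
        ((\<exists>j\<in>A. j < i) \<longrightarrow> (\<exists>j\<in>pf A. j < i) \<and> (\<exists>j\<in>qf A. j < i))"
      using a by (intro conjI impI) simp_all
  qed
  show "\<forall>A\<in>Wset n k i. \<forall>B\<in>Wset n k i. A \<subseteq> B \<longrightarrow> pf A \<subseteq> pf B \<and> qf A \<subseteq> qf B"
    using assms(8,9) by simp
qed

lemma chi1_W:
  assumes "k \<le> n" "A \<in> Wset n k i"
  shows "chi1 k i A \<in> Wset n k i"
proof (cases "\<exists>j\<in>A. j < i")
  case True
  have "insert k A \<noteq> {0..n}" using ins_full[of k A n] assms by (auto simp: Wset_def)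
  then show ?thesis using True assms by (auto simp: chi1_def Wset_def)
qed (use assms in \<open>simp add: chi1_def\<close>)

lemma psi2_W:
  assumes "2 \<le> n" "k \<le> n" "i \<le> n" "\<not> (k = n \<and> i \<in> {n - 1, n})" "A \<in> Wset n k i"
  shows "psi2 k i A \<in> Wset n k i"
proof (cases "\<exists>j\<in>A. j < i")
  case True
  have ne: "insert k (A \<inter> {0..i}) \<noteq> {0..n}"
  proof
    assume eq: "insert k (A \<inter> {0..i}) = {0..n}"
    show False
    proof (cases "i < n")
      case True then show False using ins_trunc_full[OF eq True assms(1)] assms(4) by auto
    next
      case False
      then have "i = n" using assms by auto
      then have "A \<inter> {0..i} = A" using assms(5) by (auto simp: Wset_def)
      then show False using ins_full[of k A n] eq assms(5) by (auto simp: Wset_def)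
    qed
  qed
  then show ?thesis using True assms by (auto simp: psi2_def Wset_def)
next
  case False then show ?thesis using singleton_W[OF assms(1,3)] by (simp add: psi2_def)
qed

lemma YWa:
  assumes "2 \<le> n" "k < i" "i \<le> n"
  shows "{k, i} \<in> Wset n k i"
proof -
  have "{k, i} \<noteq> {0..n}"
  proof
    assume eq: "{k, i} = {0..n}"
    have "0 \<in> {k,i}" "1 \<in> {k,i}" "2 \<in> {k,i}" using assms by (simp_all only: eq) auto
    then show False by auto
  qed
  then show ?thesis using assms by (auto simp: Wset_def)
qed

lemma YWb:
  assumes "2 \<le> n" "k \<le> n" "i \<le> n" "\<not> (k = n \<and> i \<in> {n - 1, n})" "\<not> k < i"
  shows "insert k {0..i} \<in> Wset n k i"
proof -
  have "insert k {0..i} \<noteq> {0..n}"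
  proof
    assume eq: "insert k {0..i} = {0..n}"
    then have eq2: "insert k ({0..n} \<inter> {0..i}) = {0..n}" using assms by auto
    show False
    proof (cases "i < n")
      case True then show False using ins_trunc_full[OF eq2 True assms(1)] assms(4) by auto
    next
      case False then show False using assms by auto
    qed
  qed
  then show ?thesis using assms by (auto simp: Wset_def)
qed

lemma gp1:
  assumes "k \<le> n"
  shows "goodpair n k i (\<lambda>A. A) (chi1 k i)"
proof (rule goodpairI)
  fix A assume A: "A \<in> Wset n k i"
  show "(\<lambda>A. A) A \<in> Wset n k i" using A by simp
next
  fix A assume A: "A \<in> Wset n k i"
  show "(chi1 k i) A \<in> Wset n k i" using chi1_W[OF assms A] .
next
  fix A assume A: "A \<in> Wset n k i"
  show "(\<lambda>A. A) A \<subseteq> (chi1 k i) A" by (auto simp: chi1_def)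
next
  fix A assume "A \<in> Wset n k i" "\<forall>j\<in>A. i \<le> j"
  then show "\<forall>j\<in>(\<lambda>A. A) A. i \<le> j" by (auto simp: chi1_def)
next
  fix A assume "A \<in> Wset n k i" "\<forall>j\<in>A. i \<le> j"
  then show "\<forall>j\<in>(chi1 k i) A. i \<le> j" by (auto simp: chi1_def)
next
  fix A assume "A \<in> Wset n k i" "\<exists>j\<in>A. j < i"
  then show "\<exists>j\<in>(\<lambda>A. A) A. j < i" using assms by (auto simp: chi1_def)
next
  fix A assume "A \<in> Wset n k i" "\<exists>j\<in>A. j < i"
  then show "\<exists>j\<in>(chi1 k i) A. j < i" using assms by (auto simp: chi1_def)
next
  fix A B assume "A \<in> Wset n k i" "B \<in> Wset n k i" "A \<subseteq> B"
  then show "(\<lambda>A. A) A \<subseteq> (\<lambda>A. A) B" by (auto simp: chi1_def Wset_def)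
next
  fix A B assume "A \<in> Wset n k i" "B \<in> Wset n k i" "A \<subseteq> B"
  then show "(chi1 k i) A \<subseteq> (chi1 k i) B" by (auto simp: chi1_def Wset_def)
qed

lemma gp2:
  assumes "2 \<le> n" "k \<le> n" "i \<le> n" "\<not> (k = n \<and> i \<in> {n - 1, n})"
  shows "goodpair n k i (psi2 k i) (chi1 k i)"
proof (rule goodpairI)
  fix A assume A: "A \<in> Wset n k i"
  show "(psi2 k i) A \<in> Wset n k i" using psi2_W[OF assms A] .
next
  fix A assume A: "A \<in> Wset n k i"
  show "(chi1 k i) A \<in> Wset n k i" using chi1_W[OF assms(2) A] .
next
  fix A assume A: "A \<in> Wset n k i"
  show "(psi2 k i) A \<subseteq> (chi1 k i) A" using A by (auto simp: psi2_def chi1_def Wset_def)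
next
  fix A assume "A \<in> Wset n k i" "\<forall>j\<in>A. i \<le> j"
  then show "\<forall>j\<in>(psi2 k i) A. i \<le> j" by (auto simp: chi1_def psi2_def)
next
  fix A assume "A \<in> Wset n k i" "\<forall>j\<in>A. i \<le> j"
  then show "\<forall>j\<in>(chi1 k i) A. i \<le> j" by (auto simp: chi1_def psi2_def)
next
  fix A assume "A \<in> Wset n k i" "\<exists>j\<in>A. j < i"
  then show "\<exists>j\<in>(psi2 k i) A. j < i" using assms by (auto simp: chi1_def psi2_def)
next
  fix A assume "A \<in> Wset n k i" "\<exists>j\<in>A. j < i"
  then show "\<exists>j\<in>(chi1 k i) A. j < i" using assms by (auto simp: chi1_def psi2_def)
next
  fix A B assume "A \<in> Wset n k i" "B \<in> Wset n k i" "A \<subseteq> B"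
  then show "(psi2 k i) A \<subseteq> (psi2 k i) B" by (auto simp: chi1_def psi2_def Wset_def)
next
  fix A B assume "A \<in> Wset n k i" "B \<in> Wset n k i" "A \<subseteq> B"
  then show "(chi1 k i) A \<subseteq> (chi1 k i) B" by (auto simp: chi1_def psi2_def Wset_def)
qed

lemma gp3a:
  assumes "2 \<le> n" "k \<le> n" "i \<le> n" "\<not> (k = n \<and> i \<in> {n - 1, n})" "k < i"
  shows "goodpair n k i (psi3 {k, i} i) (psi2 k i)"
proof (rule goodpairI)
  fix A assume A: "A \<in> Wset n k i"
  show "(psi3 {k, i} i) A \<in> Wset n k i" using YWa[OF assms(1,5,3)] singleton_W[OF assms(1,3)] by (simp add: psi3_def)
next
  fix A assume A: "A \<in> Wset n k i"
  show "(psi2 k i) A \<in> Wset n k i" using psi2_W[OF assms(1-4) A] .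
next
  fix A assume A: "A \<in> Wset n k i"
  show "(psi3 {k, i} i) A \<subseteq> (psi2 k i) A" using A by (auto simp: psi2_def psi3_def Wset_def)
next
  fix A assume "A \<in> Wset n k i" "\<forall>j\<in>A. i \<le> j"
  then show "\<forall>j\<in>(psi3 {k, i} i) A. i \<le> j" by (auto simp: psi3_def psi2_def)
next
  fix A assume "A \<in> Wset n k i" "\<forall>j\<in>A. i \<le> j"
  then show "\<forall>j\<in>(psi2 k i) A. i \<le> j" by (auto simp: psi3_def psi2_def)
next
  fix A assume "A \<in> Wset n k i" "\<exists>j\<in>A. j < i"
  then show "\<exists>j\<in>(psi3 {k, i} i) A. j < i" using assms by (auto simp: psi3_def psi2_def)
next
  fix A assume "A \<in> Wset n k i" "\<exists>j\<in>A. j < i"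
  then show "\<exists>j\<in>(psi2 k i) A. j < i" using assms by (auto simp: psi3_def psi2_def)
next
  fix A B assume "A \<in> Wset n k i" "B \<in> Wset n k i" "A \<subseteq> B"
  then show "(psi3 {k, i} i) A \<subseteq> (psi3 {k, i} i) B" by (auto simp: psi3_def psi2_def Wset_def)
next
  fix A B assume "A \<in> Wset n k i" "B \<in> Wset n k i" "A \<subseteq> B"
  then show "(psi2 k i) A \<subseteq> (psi2 k i) B" by (auto simp: psi3_def psi2_def Wset_def)
qed

lemma gp3b:
  assumes "2 \<le> n" "k \<le> n" "i \<le> n" "\<not> (k = n \<and> i \<in> {n - 1, n})" "\<not> k < i" "1 \<le> i"
  shows "goodpair n k i (psi2 k i) (psi3 (insert k {0..i}) i)"
proof (rule goodpairI)
  fix A assume A: "A \<in> Wset n k i"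
  show "(psi2 k i) A \<in> Wset n k i" using psi2_W[OF assms(1-4) A] .
next
  fix A assume A: "A \<in> Wset n k i"
  show "(psi3 (insert k {0..i}) i) A \<in> Wset n k i" using YWb[OF assms(1-5)] singleton_W[OF assms(1,3)] by (simp add: psi3_def)
next
  fix A assume A: "A \<in> Wset n k i"
  show "(psi2 k i) A \<subseteq> (psi3 (insert k {0..i}) i) A" using A by (auto simp: psi2_def psi3_def Wset_def)
next
  fix A assume "A \<in> Wset n k i" "\<forall>j\<in>A. i \<le> j"
  then show "\<forall>j\<in>(psi2 k i) A. i \<le> j" by (auto simp: psi3_def psi2_def)
next
  fix A assume "A \<in> Wset n k i" "\<forall>j\<in>A. i \<le> j"
  then show "\<forall>j\<in>(psi3 (insert k {0..i}) i) A. i \<le> j" by (auto simp: psi3_def psi2_def)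
next
  fix A assume "A \<in> Wset n k i" "\<exists>j\<in>A. j < i"
  then show "\<exists>j\<in>(psi2 k i) A. j < i" using assms by (auto simp: psi3_def psi2_def)
next
  fix A assume "A \<in> Wset n k i" "\<exists>j\<in>A. j < i"
  then show "\<exists>j\<in>(psi3 (insert k {0..i}) i) A. j < i" using assms by (auto simp: psi3_def psi2_def)
next
  fix A B assume "A \<in> Wset n k i" "B \<in> Wset n k i" "A \<subseteq> B"
  then show "(psi2 k i) A \<subseteq> (psi2 k i) B" by (auto simp: psi3_def psi2_def Wset_def)
next
  fix A B assume "A \<in> Wset n k i" "B \<in> Wset n k i" "A \<subseteq> B"
  then show "(psi3 (insert k {0..i}) i) A \<subseteq> (psi3 (insert k {0..i}) i) B" by (auto simp: psi3_def psi2_def Wset_def)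
qed

theorem lemma6p4:
  fixes n k i :: nat
  assumes "2 \<le> n" and "k \<le> n" and "1 \<le> i" and "i \<le> n"
    and "\<not> (k = n \<and> i \<in> {n - 1, n})"
  shows "weakly_contractible
           (nerve_realization (preimSd n k {i} \<inter> Vplus n k (preimSd n k {0..<i})))"
proof -
  have Peq: "preimSd n k {i} \<inter> Vplus n k (preimSd n k {0..<i}) = PP n k i"
    using P_iff by (auto simp: PP_def)
  define Y where "Y = (if k < i then {k, i} else insert k {0..i})"
  let ?P = "PP n k i"
  let ?X = "nerve_realization ?P"
  have YW: "Y \<in> Wset n k i"
    using YWa[OF assms(1) _ assms(4)] YWb[OF assms(1,2,4,5)] by (auto simp: Y_def)
  have Ymeet: "\<exists>j\<in>Y. j < i"
  proof (cases "k < i")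
    case True then show ?thesis by (auto simp: Y_def)
  next
    case False then have "0 \<in> Y" by (simp add: Y_def)
    then show ?thesis using assms(3) by force
  qed
  have iY: "i \<in> Y" by (auto simp: Y_def)
  have hY: "homotopic_with (\<lambda>_. True) ?X ?X (pushf ?P (\<lambda>C. psi2 k i ` C)) (pushf ?P (\<lambda>C. psi3 Y i ` C))"
  proof (cases "k < i")
    case True
    then show ?thesis using homotopic_with_symD[OF member_hom[OF gp3a[OF assms(1,2,4,5) True]]]
      by (simp add: Y_def)
  next
    case False
    then show ?thesis using member_hom[OF gp3b[OF assms(1,2,4,5) False assms(3)]]
      by (simp add: Y_def)
  qed
  note h1 = member_hom[OF gp1[OF assms(2)]]
  note h2 = homotopic_with_symD[OF member_hom[OF gp2[OF assms(1,2,4,5)]]]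
  have hall: "homotopic_with (\<lambda>_. True) ?X ?X (pushf ?P (\<lambda>C. (\<lambda>A. A) ` C)) (pushf ?P (\<lambda>C. psi3 Y i ` C))"
    using homotopic_with_trans[OF homotopic_with_trans[OF h1 h2] hY] .
  define Cs where "Cs = {{i}, Y}"
  have img: "psi3 Y i ` C = Cs" if "C \<in> ?P" for C
  proof -
    have g: "goodC n k i C" using that by (simp add: PP_def)
    have "\<exists>B\<in>C. (\<forall>j\<in>B. i \<le> j) \<and> (\<forall>A\<in>C. B \<subseteq> A)" using g by (simp add: goodC_def)
    then obtain B where B: "B \<in> C" "\<forall>j\<in>B. i \<le> j" by blast
    have "\<exists>A\<in>C. \<exists>j\<in>A. j < i" using g by (simp add: goodC_def)
    then obtain A where A: "A \<in> C" "\<exists>j\<in>A. j < i" by blast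
    have nB: "\<not> (\<exists>j\<in>B. j < i)" using B(2) by force
    have pB: "psi3 Y i B = {i}" using nB by (simp add: psi3_def)
    have pA: "psi3 Y i A = Y" using A(2) by (simp add: psi3_def)
    have pD: "psi3 Y i D \<in> Cs" for D by (simp add: psi3_def Cs_def)
    have s1: "psi3 Y i ` C \<subseteq> Cs" using pD by blast
    have m1: "{i} \<in> psi3 Y i ` C" using B(1) pB by (metis image_eqI)
    have m2: "Y \<in> psi3 Y i ` C" using A(1) pA by (metis image_eqI)
    have "Cs \<subseteq> psi3 Y i ` C" unfolding Cs_def using m1 m2 by blast
    then show ?thesis using s1 by blast
  qed
  have CsP: "Cs \<in> ?P"
  proof -
    have s1: "{i} \<in> Wset n k i" using singleton_W[OF assms(1,4), of k] .
    have "Cs \<noteq> {}" "Cs \<subseteq> Wset n k i" unfolding Cs_def using s1 YW by auto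
    moreover have "\<forall>A\<in>Cs. \<forall>B\<in>Cs. A \<subseteq> B \<or> B \<subseteq> A" unfolding Cs_def using iY by auto
    moreover have "\<exists>B\<in>Cs. (\<forall>j\<in>B. i \<le> j) \<and> (\<forall>A\<in>Cs. B \<subseteq> A)"
      by (rule bexI[of _ "{i}"]) (auto simp: Cs_def iY)
    moreover have "\<exists>A\<in>Cs. \<exists>j\<in>A. j < i" using Ymeet unfolding Cs_def by blast
    ultimately have "goodC n k i Cs" unfolding goodC_def by blast
    then show ?thesis by (simp add: PP_def)
  qed
  define \<delta> where "\<delta> = (\<lambda>E::nat set set. if E = Cs then (1::real) else 0)"
  have ts: "topspace ?X = realS ?P" by (rule topspace_nr)
  have pid: "pushf ?P (\<lambda>C. C) x = x" if "x \<in> topspace ?X" for x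
  proof
    fix E
    have xs: "x \<in> realS ?P" using that ts by simp
    show "pushf ?P (\<lambda>C. C) x E = x E"
    proof (cases "E \<in> ?P")
      case True
      then have "{C \<in> ?P. C = E} = {E}" by auto
      then show ?thesis by (simp add: pushf_def)
    next
      case False
      then have "{C \<in> ?P. C = E} = {}" by auto
      moreover have "x E = 0" using xs False by (simp add: realS_def)
      ultimately show ?thesis by (simp add: pushf_def)
    qed
  qed
  have pc: "pushf ?P (\<lambda>C. psi3 Y i ` C) x = \<delta>" if "x \<in> topspace ?X" for x
  proof
    fix E
    have xs: "x \<in> realS ?P" using that ts by simp
    have "pushf ?P (\<lambda>C. psi3 Y i ` C) = pushf ?P (\<lambda>C. Cs)" using img by (intro pushf_cong) auto
    moreover have "pushf ?P (\<lambda>C. Cs) x E = \<delta> E"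
    proof (cases "E = Cs")
      case True
      then have "{C \<in> ?P. Cs = E} = ?P" by auto
      then show ?thesis using realS_sumP[OF xs PP_finite] True by (simp add: pushf_def \<delta>_def)
    next
      case False
      then have "{C \<in> ?P. Cs = E} = {}" by auto
      then show ?thesis using False by (simp add: pushf_def \<delta>_def)
    qed
    ultimately show "pushf ?P (\<lambda>C. psi3 Y i ` C) x E = \<delta> E" by simp
  qed
  have e1: "homotopic_with (\<lambda>_. True) ?X ?X id (pushf ?P (\<lambda>C. (\<lambda>A. A) ` C))"
    by (rule homotopic_with_equal) (auto simp: pid)
  have e2: "homotopic_with (\<lambda>_. True) ?X ?X (pushf ?P (\<lambda>C. psi3 Y i ` C)) (\<lambda>x. \<delta>)"
    using homotopic_with_imp_continuous_maps[OF hall] pc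
    by (intro homotopic_with_equal) auto
  have hid: "homotopic_with (\<lambda>_. True) ?X ?X id (\<lambda>x. \<delta>)"
    using homotopic_with_trans[OF homotopic_with_trans[OF e1 hall] e2] .
  have dts: "\<delta> \<in> topspace ?X"
  proof -
    have "{c. \<delta> c \<noteq> 0} = {Cs}" by (auto simp: \<delta>_def)
    then show ?thesis unfolding ts realS_def using CsP by (auto simp: \<delta>_def)
  qed
  have "weakly_contractible ?X"
    unfolding weakly_contractible_def
  proof (intro conjI allI impI)
    show "topspace ?X \<noteq> {}" using dts by blast
    fix m f assume f: "continuous_map (nsphere m) ?X f"
    have "homotopic_with (\<lambda>_. True) (nsphere m) ?X (id \<circ> f) ((\<lambda>x. \<delta>) \<circ> f)"
      by (rule homotopic_with_compose_continuous_map_right[OF hid f]) simp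
    then show "\<exists>c\<in>topspace ?X. homotopic_with (\<lambda>_. True) (nsphere m) ?X f (\<lambda>_. c)"
      using dts by (auto simp: o_def)
  qed
  then show ?thesis by (simp add: Peq)
qed

end
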